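(* Let $G_1,G_2$ be multiplicative Lie algebras and $\mu:G_1\to G_2$ a multiplicative Lie algebra homomorphism such that $\ker\mu\cap{}^M[G_1,G_1]=1$ and $\mu(G_1)\,\mathcal Z(G_2)=G_2$. Then the map $\nu:G_1/\mathcal Z(G_1)\to G_2/\mathcal Z(G_2)$, $\nu(g\mathcal Z(G_1))=\mu(g)\mathcal Z(G_2)$, together with $\mu|_{{}^M[G_1,G_1]}$, forms an isoclinism $(\nu,\mu|_{{}^M[G_1,G_1]})$ between $G_1$ and $G_2$.
   Context: A multiplicative Lie algebra is a group $(G,\cdot)$ with a binary operation $\star$ such that for all $x,y,z\in G$: $x\star x=1$; $x\star(yz)=(x\star y)\,{}^y(x\star z)$; $(xy)\star z={}^x(y\star z)(x\star z)$; $((x\star y)\star{}^yz)((y\star z)\star{}^zx)((z\star x)\star{}^xy)=1$; ${}^z(x\star y)={}^zx\star{}^zy$, where ${}^xy=xyx^{-1}$. Homomorphisms preserve both operations. $Z(G)$ is the group center, $LZ(G)=\{x: x\star y=1\ \forall y\}$, $\mathcal Z(G)=LZ(G)\cap Z(G)$; $[x,y]$ is the group commutator; ${}^M[G,G]=(G\star G)[G,G]$ with $G\star G$ the ideal generated by all $a\star b$. $G_1,G_2$ are isoclinic via $(\nu,\mu')$ if $\nu:G_1/\mathcal Z(G_1)\to G_2/\mathcal Z(G_2)$ and $\mu':{}^M[G_1,G_1]\to{}^M[G_2,G_2]$ are multiplicative Lie algebra isomorphisms with $\mu'([g,g'])=[h,h']$ and $\mu'(g\star g')=h\star h'$ whenever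 $\nu(g\mathcal Z(G_1))=h\mathcal Z(G_2)$ and $\nu(g'\mathcal Z(G_1))=h'\mathcal Z(G_2)$. *)

theory Defs
  imports "HOL-Algebra.Algebra"
begin

record 'a mla = "'a monoid" + star :: "'a \<Rightarrow> 'a \<Rightarrow> 'a"

definition conjg :: "('a, 'b) monoid_scheme \<Rightarrow> 'a \<Rightarrow> 'a \<Rightarrow> 'a" where
  "conjg G x y = x \<otimes>\<^bsub>G\<^esub> y \<otimes>\<^bsub>G\<^esub> inv\<^bsub>G\<^esub> x"

definition gcomm :: "('a, 'b) monoid_scheme \<Rightarrow> 'a \<Rightarrow> 'a \<Rightarrow> 'a" where
  "gcomm G x y = x \<otimes>\<^bsub>G\<^esub> y \<otimes>\<^bsub>G\<^esub> inv\<^bsub>G\<^esub> x \<otimes>\<^bsub>G\<^esub> inv\<^bsub>G\<^esub> y"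

definition mult_lie_algebra :: "'a mla \<Rightarrow> bool" where
  "mult_lie_algebra G \<longleftrightarrow> group G \<and>
    (\<forall>x\<in>carrier G. \<forall>y\<in>carrier G. star G x y \<in> carrier G) \<and>
    (\<forall>x\<in>carrier G. star G x x = \<one>\<^bsub>G\<^esub>) \<and>
    (\<forall>x\<in>carrier G. \<forall>y\<in>carrier G. \<forall>z\<in>carrier G.
       star G x (y \<otimes>\<^bsub>G\<^esub> z) = star G x y \<otimes>\<^bsub>G\<^esub> conjg G y (star G x z)) \<and>
    (\<forall>x\<in>carrier G. \<forall>y\<in>carrier G. \<forall>z\<in>carrier G.
       star G (x \<otimes>\<^bsub>G\<^esub> y) z = conjg G x (star G y z) \<otimes>\<^bsub>G\<^esub> star G x z) \<and>
    (\<forall>x\<in>carrier G. \<forall>y\<in>carrier G. \<forall>z\<in>carrier G.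
       star G (star G x y) (conjg G y z) \<otimes>\<^bsub>G\<^esub> star G (star G y z) (conjg G z x)
         \<otimes>\<^bsub>G\<^esub> star G (star G z x) (conjg G x y) = \<one>\<^bsub>G\<^esub>) \<and>
    (\<forall>x\<in>carrier G. \<forall>y\<in>carrier G. \<forall>z\<in>carrier G.
       conjg G z (star G x y) = star G (conjg G z x) (conjg G z y))"

definition group_center :: "('a, 'b) monoid_scheme \<Rightarrow> 'a set" where
  "group_center G = {x \<in> carrier G. \<forall>y\<in>carrier G. x \<otimes>\<^bsub>G\<^esub> y = y \<otimes>\<^bsub>G\<^esub> x}"

definition LZ :: "'a mla \<Rightarrow> 'a set" where
  "LZ G = {x \<in> carrier G. \<forall>y\<in>carrier G. star G x y = \<one>\<^bsub>G\<^esub>}"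

definition mla_center :: "'a mla \<Rightarrow> 'a set" where
  "mla_center G = LZ G \<inter> group_center G"

definition mla_ideal :: "'a mla \<Rightarrow> 'a set \<Rightarrow> bool" where
  "mla_ideal G I \<longleftrightarrow> I \<lhd> G \<and>
     (\<forall>x\<in>carrier G. \<forall>i\<in>I. star G x i \<in> I \<and> star G i x \<in> I)"

definition ideal_generated :: "'a mla \<Rightarrow> 'a set \<Rightarrow> 'a set" where
  "ideal_generated G S = \<Inter>{I. mla_ideal G I \<and> S \<subseteq> I}"

definition star_ideal :: "'a mla \<Rightarrow> 'a set" where
  "star_ideal G = ideal_generated G {star G a b | a b. a \<in> carrier G \<and> b \<in> carrier G}"

definition Mcomm :: "'a mla \<Rightarrow> 'a set" where
  "Mcomm G = star_ideal G <#>\<^bsub>G\<^esub> derived G (carrier G)"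

definition sub_mla :: "'a mla \<Rightarrow> 'a set \<Rightarrow> 'a mla" where
  "sub_mla G S = \<lparr>carrier = S, monoid.mult = monoid.mult G, one = one G, star = star G\<rparr>"

text \<open>Quotient by an ideal N: cosets, with (aN) \<star> (bN) = (a \<star> b)N.\<close>
definition quot_mla :: "'a mla \<Rightarrow> 'a set \<Rightarrow> 'a set mla" where
  "quot_mla G N = \<lparr>carrier = rcosets\<^bsub>G\<^esub> N, monoid.mult = set_mult G, one = N,
     star = (\<lambda>A B. \<Union>a\<in>A. \<Union>b\<in>B. N #>\<^bsub>G\<^esub> star G a b)\<rparr>"

definition mla_hom :: "'a mla \<Rightarrow> 'b mla \<Rightarrow> ('a \<Rightarrow> 'b) set" where
  "mla_hom G H = {h. h \<in> hom G H \<and>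
     (\<forall>x\<in>carrier G. \<forall>y\<in>carrier G. h (star G x y) = star H (h x) (h y))}"

definition mla_iso :: "'a mla \<Rightarrow> 'b mla \<Rightarrow> ('a \<Rightarrow> 'b) set" where
  "mla_iso G H = {h \<in> mla_hom G H. bij_betw h (carrier G) (carrier H)}"

definition isoclinism :: "'a mla \<Rightarrow> 'b mla \<Rightarrow> ('a set \<Rightarrow> 'b set) \<Rightarrow> ('a \<Rightarrow> 'b) \<Rightarrow> bool" where
  "isoclinism G1 G2 \<nu> \<mu>' \<longleftrightarrow>
     \<nu> \<in> mla_iso (quot_mla G1 (mla_center G1)) (quot_mla G2 (mla_center G2)) \<and>
     \<mu>' \<in> mla_iso (sub_mla G1 (Mcomm G1)) (sub_mla G2 (Mcomm G2)) \<and>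
     (\<forall>g\<in>carrier G1. \<forall>g'\<in>carrier G1. \<forall>h\<in>carrier G2. \<forall>h'\<in>carrier G2.
        \<nu> (mla_center G1 #>\<^bsub>G1\<^esub> g) = mla_center G2 #>\<^bsub>G2\<^esub> h \<and>
        \<nu> (mla_center G1 #>\<^bsub>G1\<^esub> g') = mla_center G2 #>\<^bsub>G2\<^esub> h' \<longrightarrow>
        \<mu>' (gcomm G1 g g') = gcomm G2 h h' \<and> \<mu>' (star G1 g g') = star G2 h h')"

end

theory Submission imports Defs begin

locale mla = group G for G :: "'a mla" (structure) +
  assumes is_mla: "mult_lie_algebra G"
begin

lemma star_closed[simp]: "x \<in> carrier G \<Longrightarrow> y \<in> carrier G \<Longrightarrow> star G x y \<in> carrier G"
  using is_mla unfolding mult_lie_algebra_def by blast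
lemma star_self[simp]: "x \<in> carrier G \<Longrightarrow> star G x x = \<one>"
  using is_mla unfolding mult_lie_algebra_def by blast
lemma star_mult_right: "x \<in> carrier G \<Longrightarrow> y \<in> carrier G \<Longrightarrow> z \<in> carrier G \<Longrightarrow>
   star G x (y \<otimes> z) = star G x y \<otimes> conjg G y (star G x z)"
  using is_mla unfolding mult_lie_algebra_def by blast
lemma star_mult_left: "x \<in> carrier G \<Longrightarrow> y \<in> carrier G \<Longrightarrow> z \<in> carrier G \<Longrightarrow>
   star G (x \<otimes> y) z = conjg G x (star G y z) \<otimes> star G x z"
  using is_mla unfolding mult_lie_algebra_def by blast
lemma conjg_closed[simp]: "x \<in> carrier G \<Longrightarrow> y \<in> carrier G \<Longrightarrow> conjg G x y \<in> carrier G"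
  unfolding conjg_def by simp
lemma conjg_one[simp]: "x \<in> carrier G \<Longrightarrow> conjg G x \<one> = \<one>"
  unfolding conjg_def by simp
lemma inv_cancel_left[simp]: "x \<in> carrier G \<Longrightarrow> y \<in> carrier G \<Longrightarrow> inv x \<otimes> (x \<otimes> y) = y"
  by (simp add: m_assoc[symmetric])
lemma inv_cancel_left'[simp]: "x \<in> carrier G \<Longrightarrow> y \<in> carrier G \<Longrightarrow> x \<otimes> (inv x \<otimes> y) = y"
  by (simp add: m_assoc[symmetric])
lemma conjg_mult: "x \<in> carrier G \<Longrightarrow> a \<in> carrier G \<Longrightarrow> b \<in> carrier G \<Longrightarrow>
   conjg G x a \<otimes> conjg G x b = conjg G x (a \<otimes> b)"
  unfolding conjg_def by (simp add: m_assoc)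
lemma conjg_eq_one: "x \<in> carrier G \<Longrightarrow> a \<in> carrier G \<Longrightarrow> conjg G x a = \<one> \<Longrightarrow> a = \<one>"
proof -
  assume a: "x \<in> carrier G" "a \<in> carrier G" "conjg G x a = \<one>"
  have "a = inv x \<otimes> (x \<otimes> a \<otimes> inv x) \<otimes> x" using a by (simp add: m_assoc)
  thus ?thesis using a by (simp add: conjg_def)
qed

lemma star_inv: assumes x: "x \<in> carrier G" and y: "y \<in> carrier G"
  shows "star G x y = inv (star G y x)"
proof -
  have "\<one> = star G (x \<otimes> y) (x \<otimes> y)" using x y by simp
  also have "\<dots> = conjg G x (star G y (x \<otimes> y)) \<otimes> star G x (x \<otimes> y)"
    using x y by (intro star_mult_left) auto
  also have "star G y (x \<otimes> y) = star G y x"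
    using x y by (simp add: star_mult_right)
  also have "star G x (x \<otimes> y) = conjg G x (star G x y)"
    using x y by (simp add: star_mult_right)
  finally have "conjg G x (star G y x \<otimes> star G x y) = \<one>"
    using x y by (simp add: conjg_mult)
  hence "star G y x \<otimes> star G x y = \<one>" using x y conjg_eq_one[of x "star G y x \<otimes> star G x y"] by simp
  hence "star G x y \<otimes> star G y x = \<one>" using x y inv_comm by simp
  thus ?thesis using x y inv_equality[of "star G x y" "star G y x"] by simp
qed

lemma star_one_left[simp]: assumes y: "y \<in> carrier G" shows "star G \<one> y = \<one>"
proof -
  have "star G \<one> y = star G \<one> y \<otimes> star G \<one> y"
    using star_mult_left[of \<one> \<one> y] y by (simp add: conjg_def)
  thus ?thesis using y l_cancel_one'[of "star G \<one> y" "star G \<one> y"] by simp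
qed

abbreviation "Z \<equiv> mla_center G"

lemma Z_carrier: "z \<in> Z \<Longrightarrow> z \<in> carrier G"
  unfolding mla_center_def LZ_def by auto
lemma Z_comm: "z \<in> Z \<Longrightarrow> y \<in> carrier G \<Longrightarrow> z \<otimes> y = y \<otimes> z"
  unfolding mla_center_def group_center_def by auto
lemma Z_star_left[simp]: "z \<in> Z \<Longrightarrow> y \<in> carrier G \<Longrightarrow> star G z y = \<one>"
  unfolding mla_center_def LZ_def by auto
lemma Z_star_right[simp]: "z \<in> Z \<Longrightarrow> y \<in> carrier G \<Longrightarrow> star G y z = \<one>"
  using star_inv Z_carrier Z_star_left by (metis inv_one)
lemma Z_conjg[simp]: "z \<in> Z \<Longrightarrow> a \<in> carrier G \<Longrightarrow> conjg G z a = a"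
  unfolding conjg_def using Z_comm Z_carrier
  by (metis inv_closed m_assoc r_inv r_one)
lemma Z_I: "z \<in> carrier G \<Longrightarrow> (\<And>y. y \<in> carrier G \<Longrightarrow> z \<otimes> y = y \<otimes> z)
   \<Longrightarrow> (\<And>y. y \<in> carrier G \<Longrightarrow> star G z y = \<one>) \<Longrightarrow> z \<in> Z"
  unfolding mla_center_def LZ_def group_center_def by auto

lemma star_Z_left[simp]: "x \<in> carrier G \<Longrightarrow> z \<in> Z \<Longrightarrow> y \<in> carrier G \<Longrightarrow>
  star G (x \<otimes> z) y = star G x y"
proof -
  assume a: "x \<in> carrier G" "z \<in> Z" "y \<in> carrier G"
  have c: "z \<in> carrier G" using a(2) by (rule Z_carrier)
  have "star G (x \<otimes> z) y = star G (z \<otimes> x) y" using Z_comm[OF a(2) a(1)] by simp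
  also have "\<dots> = conjg G z (star G x y) \<otimes> star G z y" using a c by (intro star_mult_left) auto
  also have "\<dots> = star G x y" using a c by simp
  finally show ?thesis .
qed
lemma star_Z_right[simp]: "x \<in> carrier G \<Longrightarrow> z \<in> Z \<Longrightarrow> y \<in> carrier G \<Longrightarrow>
  star G x (y \<otimes> z) = star G x y"
  by (simp add: star_mult_right Z_carrier)


lemma Z_swap: "z \<in> Z \<Longrightarrow> b \<in> carrier G \<Longrightarrow> r \<in> carrier G \<Longrightarrow> z \<otimes> (b \<otimes> (inv z \<otimes> r)) = b \<otimes> r"
proof -
  assume a: "z \<in> Z" "b \<in> carrier G" "r \<in> carrier G"
  have c: "z \<in> carrier G" using a(1) by (rule Z_carrier)
  have "z \<otimes> (b \<otimes> (inv z \<otimes> r)) = (z \<otimes> b) \<otimes> (inv z \<otimes> r)" using a c by (simp add: m_assoc)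
  also have "\<dots> = (b \<otimes> z) \<otimes> (inv z \<otimes> r)" using Z_comm[OF a(1) a(2)] by simp
  also have "\<dots> = b \<otimes> r" using a c by (simp add: m_assoc)
  finally show ?thesis .
qed

lemma gcomm_Z_left: assumes "x \<in> carrier G" "b \<in> carrier G" "z \<in> Z"
  shows "gcomm G (x \<otimes> z) b = gcomm G x b"
  using assms Z_carrier[OF assms(3)] unfolding gcomm_def
  by (simp add: inv_mult_group m_assoc Z_swap)

lemma gcomm_Z_right: assumes "a \<in> carrier G" "y \<in> carrier G" "w \<in> Z"
  shows "gcomm G a (y \<otimes> w) = gcomm G a y"
  using assms Z_carrier[OF assms(3)] unfolding gcomm_def
  by (simp add: inv_mult_group m_assoc Z_swap)

lemma gcomm_Z: assumes "x \<in> carrier G" "y \<in> carrier G" "z \<in> Z" "w \<in> Z"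
  shows "gcomm G (x \<otimes> z) (y \<otimes> w) = gcomm G x y"
  using assms Z_carrier[OF assms(3)] gcomm_Z_left gcomm_Z_right by simp

lemma gcomm_closed[simp]: "x \<in> carrier G \<Longrightarrow> y \<in> carrier G \<Longrightarrow> gcomm G x y \<in> carrier G"
  unfolding gcomm_def by simp

lemma Z_one: "\<one> \<in> Z" by (rule Z_I) auto

lemma Z_inv: assumes z: "z \<in> Z" shows "inv z \<in> Z"
proof (rule Z_I)
  have c: "z \<in> carrier G" using z Z_carrier by auto
  thus "inv z \<in> carrier G" by simp
  fix y assume y: "y \<in> carrier G"
  have "inv z \<otimes> y = inv z \<otimes> (y \<otimes> z) \<otimes> inv z" using c y by (simp add: m_assoc)
  also have "\<dots> = inv z \<otimes> (z \<otimes> y) \<otimes> inv z" using Z_comm[OF z y] by simp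
  also have "\<dots> = y \<otimes> inv z" using c y by simp
  finally show "inv z \<otimes> y = y \<otimes> inv z" .
  have "star G (z \<otimes> inv z) y = conjg G z (star G (inv z) y) \<otimes> star G z y"
    using c y by (intro star_mult_left) auto
  thus "star G (inv z) y = \<one>" using c y z by simp
qed

lemma Z_mult: assumes z: "z \<in> Z" and w: "w \<in> Z" shows "z \<otimes> w \<in> Z"
proof (rule Z_I)
  have c: "z \<in> carrier G" "w \<in> carrier G" using z w Z_carrier by auto
  thus "z \<otimes> w \<in> carrier G" by simp
  fix y assume y: "y \<in> carrier G"
  show "z \<otimes> w \<otimes> y = y \<otimes> (z \<otimes> w)"
    using c y Z_comm[OF z] Z_comm[OF w] by (metis m_assoc)
  show "star G (z \<otimes> w) y = \<one>" using c y z w by simp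
qed

lemma Z_subgroup: "subgroup Z G"
  by (rule subgroupI) (auto intro: Z_carrier Z_one Z_inv Z_mult)

lemma Z_normal: "Z \<lhd> G"
  unfolding normal_inv_iff
proof (intro conjI Z_subgroup ballI)
  fix x h assume x: "x \<in> carrier G" and h: "h \<in> Z"
  have hc: "h \<in> carrier G" using h Z_carrier by blast
  have "x \<otimes> h \<otimes> inv x = h \<otimes> x \<otimes> inv x" using Z_comm[OF h x] by simp
  also have "\<dots> = h" using x hc by (simp add: m_assoc)
  finally show "x \<otimes> h \<otimes> inv x \<in> Z" using h by simp
qed

lemma mla_ideal_carrier: "mla_ideal G (carrier G)"
  unfolding mla_ideal_def by (simp add: normal_inv_iff subgroup_self)

lemma mla_ideal_Inter: assumes "A \<noteq> {}" "\<And>I. I \<in> A \<Longrightarrow> mla_ideal G I"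
  shows "mla_ideal G (\<Inter>A)"
proof -
  have "subgroup (\<Inter>A) G" using assms subgroups_Inter
    unfolding mla_ideal_def normal_inv_iff by blast
  moreover have "\<forall>x \<in> carrier G. \<forall>h \<in> \<Inter>A. x \<otimes> h \<otimes> inv x \<in> \<Inter>A"
    using assms unfolding mla_ideal_def normal_inv_iff by blast
  moreover have "\<forall>x\<in>carrier G. \<forall>i\<in>\<Inter>A. star G x i \<in> \<Inter>A \<and> star G i x \<in> \<Inter>A"
    using assms unfolding mla_ideal_def by blast
  ultimately show ?thesis unfolding mla_ideal_def normal_inv_iff by blast
qed

abbreviation "Stars \<equiv> {star G a b | a b. a \<in> carrier G \<and> b \<in> carrier G}"

lemma star_ideal_ideal: "mla_ideal G (star_ideal G)"
  unfolding star_ideal_def ideal_generated_def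
  by (rule mla_ideal_Inter) (use mla_ideal_carrier in auto)

lemma star_ideal_least: "mla_ideal G I \<Longrightarrow> Stars \<subseteq> I \<Longrightarrow> star_ideal G \<subseteq> I"
  unfolding star_ideal_def ideal_generated_def by blast

lemma star_in_star_ideal: "a \<in> carrier G \<Longrightarrow> b \<in> carrier G \<Longrightarrow> star G a b \<in> star_ideal G"
  unfolding star_ideal_def ideal_generated_def by blast

lemma star_ideal_normal: "star_ideal G \<lhd> G"
  using star_ideal_ideal unfolding mla_ideal_def by blast

abbreviation "D \<equiv> derived G (carrier G)"

lemma D_subgroup: "subgroup D G" by (rule derived_is_subgroup) simp

lemma gcomm_in_D: "x \<in> carrier G \<Longrightarrow> y \<in> carrier G \<Longrightarrow> gcomm G x y \<in> D"
  unfolding derived_def gcomm_def by (rule generate.incl) blast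

lemma Mcomm_subgroup: "subgroup (Mcomm G) G"
proof -
  interpret second_isomorphism_grp "star_ideal G" G D
    unfolding second_isomorphism_grp_def second_isomorphism_grp_axioms_def
    using star_ideal_normal D_subgroup by blast
  show ?thesis unfolding Mcomm_def by (rule normal_set_mult_subgroup)
qed

lemma Mcomm_carrier: "Mcomm G \<subseteq> carrier G"
  using Mcomm_subgroup subgroup.subset by blast

lemma star_in_Mcomm: "a \<in> carrier G \<Longrightarrow> b \<in> carrier G \<Longrightarrow> star G a b \<in> Mcomm G"
  unfolding Mcomm_def set_mult_def
proof -
  assume a: "a \<in> carrier G" "b \<in> carrier G"
  have "\<one> \<in> D" using subgroup.one_closed[OF D_subgroup] .
  moreover have "star G a b = star G a b \<otimes> \<one>" using a by simp
  moreover have "star G a b \<in> star_ideal G" using a by (rule star_in_star_ideal)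
  ultimately show "star G a b \<in> (\<Union>h\<in>star_ideal G. \<Union>k\<in>D. {h \<otimes> k})" by blast
qed

lemma gcomm_in_Mcomm: "a \<in> carrier G \<Longrightarrow> b \<in> carrier G \<Longrightarrow> gcomm G a b \<in> Mcomm G"
  unfolding Mcomm_def set_mult_def
proof -
  assume a: "a \<in> carrier G" "b \<in> carrier G"
  have "\<one> \<in> star_ideal G"
    using subgroup.one_closed[OF normal_imp_subgroup[OF star_ideal_normal]] .
  moreover have "gcomm G a b = \<one> \<otimes> gcomm G a b" using a by simp
  moreover have "gcomm G a b \<in> D" using a by (rule gcomm_in_D)
  ultimately show "gcomm G a b \<in> (\<Union>h\<in>star_ideal G. \<Union>k\<in>D. {h \<otimes> k})" by blast
qed


lemma conjg_Z: assumes "a \<in> carrier G" "z \<in> Z" "h \<in> carrier G"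
  shows "(a \<otimes> z) \<otimes> h \<otimes> inv (a \<otimes> z) = a \<otimes> h \<otimes> inv a"
  using assms Z_carrier[OF assms(2)]
  by (simp add: inv_mult_group m_assoc Z_swap)

lemma gcomm_one_comm: assumes "x \<in> carrier G" "y \<in> carrier G" "gcomm G x y = \<one>"
  shows "x \<otimes> y = y \<otimes> x"
proof -
  have "x \<otimes> y \<otimes> inv x \<otimes> inv y = \<one>" using assms(3) unfolding gcomm_def .
  have "x \<otimes> y = (x \<otimes> y \<otimes> inv x \<otimes> inv y) \<otimes> (y \<otimes> x)"
    using assms by (simp add: m_assoc)
  also have "\<dots> = y \<otimes> x" using \<open>x \<otimes> y \<otimes> inv x \<otimes> inv y = \<one>\<close> assms by (simp only: l_one m_closed)
  finally show ?thesis .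
qed

lemma gcomm_Z_one: "z \<in> Z \<Longrightarrow> b \<in> carrier G \<Longrightarrow> gcomm G z b = \<one>"
  using gcomm_Z_left[of \<one> b z] Z_carrier[of z] by (simp add: gcomm_def)

lemma quot_carrier: "A \<in> carrier (quot_mla G Z) \<longleftrightarrow> (\<exists>g\<in>carrier G. A = Z #> g)"
  by (auto simp: quot_mla_def RCOSETS_def)

lemma quot_mult: "g \<in> carrier G \<Longrightarrow> g' \<in> carrier G \<Longrightarrow>
   (Z #> g) \<otimes>\<^bsub>quot_mla G Z\<^esub> (Z #> g') = Z #> (g \<otimes> g')"
proof -
  assume "g \<in> carrier G" "g' \<in> carrier G"
  hence "(Z #> g) <#> (Z #> g') = Z #> (g \<otimes> g')" by (rule normal.rcos_sum[OF Z_normal])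
  thus ?thesis by (simp add: quot_mla_def)
qed

lemma quot_star: assumes g: "g \<in> carrier G" and g': "g' \<in> carrier G"
  shows "star (quot_mla G Z) (Z #> g) (Z #> g') = Z #> star G g g'"
proof -
  have k: "star G a b = star G g g'" if a: "a \<in> Z #> g" and b: "b \<in> Z #> g'" for a b
  proof -
    obtain z where z: "z \<in> Z" "a = z \<otimes> g" using a unfolding r_coset_def by blast
    obtain w where w: "w \<in> Z" "b = w \<otimes> g'" using b unfolding r_coset_def by blast
    have "star G a b = star G (g \<otimes> z) (g' \<otimes> w)" using z w g g' Z_comm by simp
    also have "\<dots> = star G g g'" using z w g g' Z_carrier by simp
    finally show ?thesis .
  qed
  have "g \<in> Z #> g" "g' \<in> Z #> g'" using g g' rcos_self Z_subgroup by auto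
  hence mem: "g \<in> Z #> g" "g' \<in> Z #> g'" .
  have "star (quot_mla G Z) (Z #> g) (Z #> g') = (\<Union>a\<in>Z #> g. \<Union>b\<in>Z #> g'. Z #> star G a b)"
    by (simp add: quot_mla_def)
  also have "\<dots> = Z #> star G g g'"
  proof
    show "(\<Union>a\<in>Z #> g. \<Union>b\<in>Z #> g'. Z #> star G a b) \<subseteq> Z #> star G g g'"
      using k by fastforce
    show "Z #> star G g g' \<subseteq> (\<Union>a\<in>Z #> g. \<Union>b\<in>Z #> g'. Z #> star G a b)"
      using mem by blast
  qed
  finally show ?thesis .
qed

end

locale mla_pair = G1: mla G1 + G2: mla G2
  for G1 :: "'a mla" and G2 :: "'b mla" +
  fixes \<mu> :: "'a \<Rightarrow> 'b"
  assumes mu: "\<mu> \<in> mla_hom G1 G2"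
    and ker: "kernel G1 G2 \<mu> \<inter> Mcomm G1 = {\<one>\<^bsub>G1\<^esub>}"
    and surj: "(\<mu> ` carrier G1) <#>\<^bsub>G2\<^esub> mla_center G2 = carrier G2"
begin

lemma mu_hom: "\<mu> \<in> hom G1 G2" using mu unfolding mla_hom_def by blast

sublocale group_hom G1 G2 \<mu>
  by unfold_locales (rule mu_hom)

lemma mu_star: "x \<in> carrier G1 \<Longrightarrow> y \<in> carrier G1 \<Longrightarrow> \<mu> (star G1 x y) = star G2 (\<mu> x) (\<mu> y)"
  using mu unfolding mla_hom_def by blast

lemma mu_gcomm: "x \<in> carrier G1 \<Longrightarrow> y \<in> carrier G1 \<Longrightarrow> \<mu> (gcomm G1 x y) = gcomm G2 (\<mu> x) (\<mu> y)"
  unfolding gcomm_def by simp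

lemma decomp: assumes "x \<in> carrier G2"
  obtains g z where "g \<in> carrier G1" "z \<in> mla_center G2" "x = \<mu> g \<otimes>\<^bsub>G2\<^esub> z"
  using assms surj unfolding set_mult_def by blast

lemma ker_M: "a \<in> Mcomm G1 \<Longrightarrow> \<mu> a = \<one>\<^bsub>G2\<^esub> \<Longrightarrow> a = \<one>\<^bsub>G1\<^esub>"
  using ker G1.Mcomm_carrier unfolding kernel_def by blast

lemma mu_Z: assumes z: "z \<in> mla_center G1" shows "\<mu> z \<in> mla_center G2"
proof (rule G2.Z_I)
  have zc: "z \<in> carrier G1" using z G1.Z_carrier by blast
  thus "\<mu> z \<in> carrier G2" by simp
  fix y assume y: "y \<in> carrier G2"
  then obtain g w where gw: "g \<in> carrier G1" "w \<in> mla_center G2" "y = \<mu> g \<otimes>\<^bsub>G2\<^esub> w"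
    by (rule decomp)
  have wc: "w \<in> carrier G2" using gw G2.Z_carrier by blast
  have "\<mu> (z \<otimes>\<^bsub>G1\<^esub> g) = \<mu> (g \<otimes>\<^bsub>G1\<^esub> z)" using G1.Z_comm[OF z gw(1)] by simp
  hence e1: "\<mu> z \<otimes>\<^bsub>G2\<^esub> \<mu> g = \<mu> g \<otimes>\<^bsub>G2\<^esub> \<mu> z"
    using zc gw(1) by simp
  have e2: "w \<otimes>\<^bsub>G2\<^esub> \<mu> z = \<mu> z \<otimes>\<^bsub>G2\<^esub> w" using G2.Z_comm[OF gw(2), of "\<mu> z"] zc by simp
  have "\<mu> z \<otimes>\<^bsub>G2\<^esub> (\<mu> g \<otimes>\<^bsub>G2\<^esub> w) = (\<mu> z \<otimes>\<^bsub>G2\<^esub> \<mu> g) \<otimes>\<^bsub>G2\<^esub> w"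
    using zc gw(1) wc by (simp add: G2.m_assoc)
  also have "\<dots> = \<mu> g \<otimes>\<^bsub>G2\<^esub> (\<mu> z \<otimes>\<^bsub>G2\<^esub> w)"
    using e1 zc gw(1) wc by (simp add: G2.m_assoc)
  also have "\<dots> = \<mu> g \<otimes>\<^bsub>G2\<^esub> w \<otimes>\<^bsub>G2\<^esub> \<mu> z"
    using e2 zc gw(1) wc by (simp add: G2.m_assoc)
  finally have "\<mu> z \<otimes>\<^bsub>G2\<^esub> (\<mu> g \<otimes>\<^bsub>G2\<^esub> w) = \<mu> g \<otimes>\<^bsub>G2\<^esub> w \<otimes>\<^bsub>G2\<^esub> \<mu> z" .
  thus "\<mu> z \<otimes>\<^bsub>G2\<^esub> y = y \<otimes>\<^bsub>G2\<^esub> \<mu> z" using gw by simp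
  have "star G2 (\<mu> z) y = star G2 (\<mu> z) (\<mu> g)" using gw zc by simp
  also have "\<dots> = \<mu> (star G1 z g)" using zc gw by (simp add: mu_star)
  also have "\<dots> = \<one>\<^bsub>G2\<^esub>" using z gw by simp
  finally show "star G2 (\<mu> z) y = \<one>\<^bsub>G2\<^esub>" .
qed

lemma mu_Z_rev: assumes x: "x \<in> carrier G1" and mx: "\<mu> x \<in> mla_center G2"
  shows "x \<in> mla_center G1"
proof (rule G1.Z_I)
  show "x \<in> carrier G1" by (rule x)
  fix y assume y: "y \<in> carrier G1"
  have "\<mu> (gcomm G1 x y) = \<one>\<^bsub>G2\<^esub>" using x y mx by (simp add: mu_gcomm G2.gcomm_Z_one)
  hence "gcomm G1 x y = \<one>\<^bsub>G1\<^esub>" using ker_M G1.gcomm_in_Mcomm x y by blast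
  thus "x \<otimes>\<^bsub>G1\<^esub> y = y \<otimes>\<^bsub>G1\<^esub> x" using x y G1.gcomm_one_comm by blast
  have "\<mu> (star G1 x y) = \<one>\<^bsub>G2\<^esub>" using x y mx by (simp add: mu_star)
  thus "star G1 x y = \<one>\<^bsub>G1\<^esub>" using ker_M G1.star_in_Mcomm x y by blast
qed

lemma img_star_ideal: "\<mu> ` star_ideal G1 = star_ideal G2"
proof
  let ?P = "{x \<in> carrier G1. \<mu> x \<in> star_ideal G2}"
  have S2: "mla_ideal G2 (star_ideal G2)" by (rule G2.star_ideal_ideal)
  hence S2n: "star_ideal G2 \<lhd> G2" unfolding mla_ideal_def by blast
  hence S2s: "subgroup (star_ideal G2) G2" by (rule normal_imp_subgroup)
  have "subgroup ?P G1"
  proof (rule G1.subgroupI)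
    show "?P \<subseteq> carrier G1" by blast
    show "?P \<noteq> {}" using S2s subgroup.one_closed by fastforce
    fix a b assume a: "a \<in> ?P" and b: "b \<in> ?P"
    show "inv\<^bsub>G1\<^esub> a \<in> ?P" using a S2s subgroup.m_inv_closed by fastforce
    show "a \<otimes>\<^bsub>G1\<^esub> b \<in> ?P" using a b S2s subgroup.m_closed by fastforce
  qed
  moreover have "\<forall>x\<in>carrier G1. \<forall>h\<in>?P. x \<otimes>\<^bsub>G1\<^esub> h \<otimes>\<^bsub>G1\<^esub> inv\<^bsub>G1\<^esub> x \<in> ?P"
    using S2n unfolding G2.normal_inv_iff by auto
  moreover have "\<forall>x\<in>carrier G1. \<forall>i\<in>?P. star G1 x i \<in> ?P \<and> star G1 i x \<in> ?P"
    using S2 unfolding mla_ideal_def by (auto simp: mu_star)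
  ultimately have "mla_ideal G1 ?P" unfolding mla_ideal_def G1.normal_inv_iff by blast
  moreover have "G1.Stars \<subseteq> ?P" using G2.star_in_star_ideal by (auto simp: mu_star)
  ultimately have "star_ideal G1 \<subseteq> ?P" by (rule G1.star_ideal_least)
  thus "\<mu> ` star_ideal G1 \<subseteq> star_ideal G2" by blast
next
  have S1: "mla_ideal G1 (star_ideal G1)" by (rule G1.star_ideal_ideal)
  hence S1n: "star_ideal G1 \<lhd> G1" unfolding mla_ideal_def by blast
  hence S1s: "subgroup (star_ideal G1) G1" by (rule normal_imp_subgroup)
  have S1c: "star_ideal G1 \<subseteq> carrier G1" using S1s subgroup.subset by blast
  have "subgroup (\<mu> ` star_ideal G1) G2" using S1s subgroup_img_is_subgroup by blast
  moreover have "\<forall>x\<in>carrier G2. \<forall>h\<in>\<mu> ` star_ideal G1. x \<otimes>\<^bsub>G2\<^esub> h \<otimes>\<^bsub>G2\<^esub> inv\<^bsub>G2\<^esub> x \<in> \<mu> ` star_ideal G1"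
  proof (intro ballI)
    fix x h assume x: "x \<in> carrier G2" and h: "h \<in> \<mu> ` star_ideal G1"
    obtain s where s: "s \<in> star_ideal G1" "h = \<mu> s" using h by blast
    obtain g w where gw: "g \<in> carrier G1" "w \<in> mla_center G2" "x = \<mu> g \<otimes>\<^bsub>G2\<^esub> w"
      using x by (rule decomp)
    have sc: "s \<in> carrier G1" using s S1c by blast
    have "x \<otimes>\<^bsub>G2\<^esub> h \<otimes>\<^bsub>G2\<^esub> inv\<^bsub>G2\<^esub> x = \<mu> g \<otimes>\<^bsub>G2\<^esub> \<mu> s \<otimes>\<^bsub>G2\<^esub> inv\<^bsub>G2\<^esub> \<mu> g"
      using gw s sc G2.conjg_Z by simp
    also have "\<dots> = \<mu> (g \<otimes>\<^bsub>G1\<^esub> s \<otimes>\<^bsub>G1\<^esub> inv\<^bsub>G1\<^esub> g)" using gw sc by simp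
    finally show "x \<otimes>\<^bsub>G2\<^esub> h \<otimes>\<^bsub>G2\<^esub> inv\<^bsub>G2\<^esub> x \<in> \<mu> ` star_ideal G1"
      using S1n gw s unfolding G1.normal_inv_iff by blast
  qed
  moreover have "\<forall>x\<in>carrier G2. \<forall>i\<in>\<mu> ` star_ideal G1. star G2 x i \<in> \<mu> ` star_ideal G1 \<and> star G2 i x \<in> \<mu> ` star_ideal G1"
  proof (intro ballI)
    fix x h assume x: "x \<in> carrier G2" and h: "h \<in> \<mu> ` star_ideal G1"
    obtain s where s: "s \<in> star_ideal G1" "h = \<mu> s" using h by blast
    obtain g w where gw: "g \<in> carrier G1" "w \<in> mla_center G2" "x = \<mu> g \<otimes>\<^bsub>G2\<^esub> w"
      using x by (rule decomp)
    have sc: "s \<in> carrier G1" using s S1c by blast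
    have "star G2 x h = \<mu> (star G1 g s)" using gw s sc by (simp add: mu_star)
    moreover have "star G2 h x = \<mu> (star G1 s g)" using gw s sc by (simp add: mu_star)
    moreover have "star G1 g s \<in> star_ideal G1" "star G1 s g \<in> star_ideal G1"
      using S1 gw s unfolding mla_ideal_def by auto
    ultimately show "star G2 x h \<in> \<mu> ` star_ideal G1 \<and> star G2 h x \<in> \<mu> ` star_ideal G1"
      by blast
  qed
  ultimately have "mla_ideal G2 (\<mu> ` star_ideal G1)" unfolding mla_ideal_def G2.normal_inv_iff by blast
  moreover have "G2.Stars \<subseteq> \<mu> ` star_ideal G1"
  proof
    fix t assume "t \<in> G2.Stars"
    then obtain a b where ab: "a \<in> carrier G2" "b \<in> carrier G2" "t = star G2 a b" by blast
    obtain g w where gw: "g \<in> carrier G1" "w \<in> mla_center G2" "a = \<mu> g \<otimes>\<^bsub>G2\<^esub> w"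
      using ab(1) by (rule decomp)
    obtain g' w' where gw': "g' \<in> carrier G1" "w' \<in> mla_center G2" "b = \<mu> g' \<otimes>\<^bsub>G2\<^esub> w'"
      using ab(2) by (rule decomp)
    have "t = \<mu> (star G1 g g')" using ab gw gw' by (simp add: mu_star)
    thus "t \<in> \<mu> ` star_ideal G1" using G1.star_in_star_ideal gw gw' by blast
  qed
  ultimately show "star_ideal G2 \<subseteq> \<mu> ` star_ideal G1" by (rule G2.star_ideal_least)
qed

lemma img_D: "\<mu> ` derived G1 (carrier G1) = derived G2 (carrier G2)"
proof -
  have "derived_set G2 (carrier G2) = derived_set G2 (\<mu> ` carrier G1)"
  proof
    show "derived_set G2 (\<mu> ` carrier G1) \<subseteq> derived_set G2 (carrier G2)"
      using hom_closed by (intro UN_mono) auto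
    show "derived_set G2 (carrier G2) \<subseteq> derived_set G2 (\<mu> ` carrier G1)"
    proof
      fix t assume "t \<in> derived_set G2 (carrier G2)"
      then obtain a b where ab: "a \<in> carrier G2" "b \<in> carrier G2" "t = gcomm G2 a b"
        unfolding gcomm_def by blast
      obtain g w where gw: "g \<in> carrier G1" "w \<in> mla_center G2" "a = \<mu> g \<otimes>\<^bsub>G2\<^esub> w"
        using ab(1) by (rule decomp)
      obtain g' w' where gw': "g' \<in> carrier G1" "w' \<in> mla_center G2" "b = \<mu> g' \<otimes>\<^bsub>G2\<^esub> w'"
        using ab(2) by (rule decomp)
      have "t = gcomm G2 (\<mu> g) (\<mu> g')" using ab gw gw' G2.gcomm_Z by simp
      thus "t \<in> derived_set G2 (\<mu> ` carrier G1)" using gw gw' unfolding gcomm_def by blast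
    qed
  qed
  hence "derived G2 (carrier G2) = derived G2 (\<mu> ` carrier G1)"
    unfolding derived_def by (rule arg_cong[where f="generate G2"])
  thus ?thesis using derived_img[OF subset_refl] by simp
qed

lemma img_Mcomm: "\<mu> ` Mcomm G1 = Mcomm G2"
proof -
  have "star_ideal G1 \<subseteq> carrier G1"
    using G1.star_ideal_normal normal_imp_subgroup subgroup.subset by blast
  moreover have "derived G1 (carrier G1) \<subseteq> carrier G1" by (simp add: G1.derived_in_carrier)
  ultimately show ?thesis unfolding Mcomm_def
    using set_mult_hom[OF mu_hom] img_star_ideal img_D by simp
qed

lemma inj_Mcomm: "inj_on \<mu> (Mcomm G1)"
proof (rule inj_onI)
  fix x y assume x: "x \<in> Mcomm G1" and y: "y \<in> Mcomm G1" and e: "\<mu> x = \<mu> y"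
  have xc: "x \<in> carrier G1" and yc: "y \<in> carrier G1" using x y G1.Mcomm_carrier by auto
  have m: "x \<otimes>\<^bsub>G1\<^esub> inv\<^bsub>G1\<^esub> y \<in> Mcomm G1"
    using subgroup.m_closed[OF G1.Mcomm_subgroup x subgroup.m_inv_closed[OF G1.Mcomm_subgroup y]] .
  have "\<mu> (x \<otimes>\<^bsub>G1\<^esub> inv\<^bsub>G1\<^esub> y) = \<one>\<^bsub>G2\<^esub>" using xc yc e by simp
  hence "x \<otimes>\<^bsub>G1\<^esub> inv\<^bsub>G1\<^esub> y = \<one>\<^bsub>G1\<^esub>" using ker_M m by blast
  moreover have "x = x \<otimes>\<^bsub>G1\<^esub> inv\<^bsub>G1\<^esub> y \<otimes>\<^bsub>G1\<^esub> y" using xc yc by (simp add: G1.m_assoc)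
  ultimately show "x = y" using yc by simp
qed

lemma nu_coset: assumes g: "g \<in> carrier G1"
  shows "\<mu> ` (mla_center G1 #>\<^bsub>G1\<^esub> g) <#>\<^bsub>G2\<^esub> mla_center G2 = mla_center G2 #>\<^bsub>G2\<^esub> \<mu> g"
proof
  show "\<mu> ` (mla_center G1 #>\<^bsub>G1\<^esub> g) <#>\<^bsub>G2\<^esub> mla_center G2 \<subseteq> mla_center G2 #>\<^bsub>G2\<^esub> \<mu> g"
  proof
    fix t assume "t \<in> \<mu> ` (mla_center G1 #>\<^bsub>G1\<^esub> g) <#>\<^bsub>G2\<^esub> mla_center G2"
    then obtain z w where zw: "z \<in> mla_center G1" "w \<in> mla_center G2"
      "t = \<mu> (z \<otimes>\<^bsub>G1\<^esub> g) \<otimes>\<^bsub>G2\<^esub> w"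
      unfolding set_mult_def r_coset_def by blast
    have zc: "z \<in> carrier G1" and wc: "w \<in> carrier G2" using zw G1.Z_carrier G2.Z_carrier by auto
    have "t = \<mu> z \<otimes>\<^bsub>G2\<^esub> (\<mu> g \<otimes>\<^bsub>G2\<^esub> w)" using zw zc wc g by (simp add: G2.m_assoc)
    also have "\<dots> = (\<mu> z \<otimes>\<^bsub>G2\<^esub> w) \<otimes>\<^bsub>G2\<^esub> \<mu> g"
      using G2.Z_comm[OF zw(2), of "\<mu> g"] zc wc g by (simp add: G2.m_assoc)
    finally show "t \<in> mla_center G2 #>\<^bsub>G2\<^esub> \<mu> g"
      using mu_Z[OF zw(1)] zw(2) G2.Z_mult unfolding r_coset_def by blast
  qed
  show "mla_center G2 #>\<^bsub>G2\<^esub> \<mu> g \<subseteq> \<mu> ` (mla_center G1 #>\<^bsub>G1\<^esub> g) <#>\<^bsub>G2\<^esub> mla_center G2"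
  proof
    fix t assume "t \<in> mla_center G2 #>\<^bsub>G2\<^esub> \<mu> g"
    then obtain w where w: "w \<in> mla_center G2" "t = w \<otimes>\<^bsub>G2\<^esub> \<mu> g" unfolding r_coset_def by blast
    have "t = \<mu> (\<one>\<^bsub>G1\<^esub> \<otimes>\<^bsub>G1\<^esub> g) \<otimes>\<^bsub>G2\<^esub> w" using w g G2.Z_comm[OF w(1), of "\<mu> g"] by simp
    moreover have "\<one>\<^bsub>G1\<^esub> \<otimes>\<^bsub>G1\<^esub> g \<in> mla_center G1 #>\<^bsub>G1\<^esub> g"
      using G1.Z_one unfolding r_coset_def by blast
    ultimately show "t \<in> \<mu> ` (mla_center G1 #>\<^bsub>G1\<^esub> g) <#>\<^bsub>G2\<^esub> mla_center G2"
      using w unfolding set_mult_def by blast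
  qed
qed


lemma coset_rep: assumes h: "h \<in> carrier G2" and g: "g \<in> carrier G1"
  and e: "mla_center G2 #>\<^bsub>G2\<^esub> \<mu> g = mla_center G2 #>\<^bsub>G2\<^esub> h"
  obtains w where "w \<in> mla_center G2" "h = \<mu> g \<otimes>\<^bsub>G2\<^esub> w"
proof -
  have "h \<in> mla_center G2 #>\<^bsub>G2\<^esub> \<mu> g"
    using G2.repr_independenceD[OF G2.Z_subgroup h e] .
  then obtain w where w: "w \<in> mla_center G2" "h = w \<otimes>\<^bsub>G2\<^esub> \<mu> g" unfolding r_coset_def by blast
  have "h = \<mu> g \<otimes>\<^bsub>G2\<^esub> w" using w G2.Z_comm[OF w(1), of "\<mu> g"] g by simp
  thus ?thesis using w(1) that by blast
qed

lemma nu_iso: "(\<lambda>C. (\<mu> ` C) <#>\<^bsub>G2\<^esub> mla_center G2)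
   \<in> mla_iso (quot_mla G1 (mla_center G1)) (quot_mla G2 (mla_center G2))"
proof -
  let ?nu = "\<lambda>C. (\<mu> ` C) <#>\<^bsub>G2\<^esub> mla_center G2"
  let ?Q1 = "quot_mla G1 (mla_center G1)" and ?Q2 = "quot_mla G2 (mla_center G2)"
  have nc: "?nu (mla_center G1 #>\<^bsub>G1\<^esub> g) = mla_center G2 #>\<^bsub>G2\<^esub> \<mu> g" if "g \<in> carrier G1" for g
    using nu_coset[OF that] .
  have fs: "?nu \<in> carrier ?Q1 \<rightarrow> carrier ?Q2"
  proof
    fix A assume "A \<in> carrier ?Q1"
    then obtain g where g: "g \<in> carrier G1" "A = mla_center G1 #>\<^bsub>G1\<^esub> g"
      using G1.quot_carrier by blast
    show "?nu A \<in> carrier ?Q2" using g nc[OF g(1)] G2.quot_carrier hom_closed[OF g(1)] by auto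
  qed
  have hom: "?nu \<in> hom ?Q1 ?Q2"
    unfolding hom_def
  proof (intro CollectI conjI ballI fs)
    fix A B assume A: "A \<in> carrier ?Q1" and B: "B \<in> carrier ?Q1"
    obtain g where g: "g \<in> carrier G1" "A = mla_center G1 #>\<^bsub>G1\<^esub> g"
      using A G1.quot_carrier by blast
    obtain g' where g': "g' \<in> carrier G1" "B = mla_center G1 #>\<^bsub>G1\<^esub> g'"
      using B G1.quot_carrier by blast
    have "?nu (A \<otimes>\<^bsub>?Q1\<^esub> B) = ?nu (mla_center G1 #>\<^bsub>G1\<^esub> (g \<otimes>\<^bsub>G1\<^esub> g'))"
      using g g' G1.quot_mult by simp
    also have "\<dots> = mla_center G2 #>\<^bsub>G2\<^esub> (\<mu> g \<otimes>\<^bsub>G2\<^esub> \<mu> g')" using g g' nc by simp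
    also have "\<dots> = ?nu A \<otimes>\<^bsub>?Q2\<^esub> ?nu B" using g g' nc G2.quot_mult by simp
    finally show "?nu (A \<otimes>\<^bsub>?Q1\<^esub> B) = ?nu A \<otimes>\<^bsub>?Q2\<^esub> ?nu B" .
  qed
  have st: "\<forall>A\<in>carrier ?Q1. \<forall>B\<in>carrier ?Q1. ?nu (star ?Q1 A B) = star ?Q2 (?nu A) (?nu B)"
  proof (intro ballI)
    fix A B assume A: "A \<in> carrier ?Q1" and B: "B \<in> carrier ?Q1"
    obtain g where g: "g \<in> carrier G1" "A = mla_center G1 #>\<^bsub>G1\<^esub> g"
      using A G1.quot_carrier by blast
    obtain g' where g': "g' \<in> carrier G1" "B = mla_center G1 #>\<^bsub>G1\<^esub> g'"
      using B G1.quot_carrier by blast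
    have "?nu (star ?Q1 A B) = ?nu (mla_center G1 #>\<^bsub>G1\<^esub> star G1 g g')"
      using g g' G1.quot_star by simp
    also have "\<dots> = mla_center G2 #>\<^bsub>G2\<^esub> star G2 (\<mu> g) (\<mu> g')" using g g' nc by (simp add: mu_star)
    also have "\<dots> = star ?Q2 (?nu A) (?nu B)" using g g' nc G2.quot_star by simp
    finally show "?nu (star ?Q1 A B) = star ?Q2 (?nu A) (?nu B)" .
  qed
  have inj: "inj_on ?nu (carrier ?Q1)"
  proof (rule inj_onI)
    fix A B assume A: "A \<in> carrier ?Q1" and B: "B \<in> carrier ?Q1" and e: "?nu A = ?nu B"
    obtain g where g: "g \<in> carrier G1" "A = mla_center G1 #>\<^bsub>G1\<^esub> g"
      using A G1.quot_carrier by blast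
    obtain g' where g': "g' \<in> carrier G1" "B = mla_center G1 #>\<^bsub>G1\<^esub> g'"
      using B G1.quot_carrier by blast
    have "mla_center G2 #>\<^bsub>G2\<^esub> \<mu> g' = mla_center G2 #>\<^bsub>G2\<^esub> \<mu> g" using e g g' nc by simp
    then obtain w where w: "w \<in> mla_center G2" "\<mu> g = \<mu> g' \<otimes>\<^bsub>G2\<^esub> w"
      using coset_rep[of "\<mu> g" g'] g g' by auto
    have wc: "w \<in> carrier G2" using w G2.Z_carrier by blast
    have "\<mu> (inv\<^bsub>G1\<^esub> g' \<otimes>\<^bsub>G1\<^esub> g) = inv\<^bsub>G2\<^esub> \<mu> g' \<otimes>\<^bsub>G2\<^esub> (\<mu> g' \<otimes>\<^bsub>G2\<^esub> w)"
      using g g' w by simp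
    also have "\<dots> = w" using g' wc by simp
    finally have "inv\<^bsub>G1\<^esub> g' \<otimes>\<^bsub>G1\<^esub> g \<in> mla_center G1" using mu_Z_rev g g' w by simp
    then obtain z where z: "z \<in> mla_center G1" "inv\<^bsub>G1\<^esub> g' \<otimes>\<^bsub>G1\<^esub> g = z" by blast
    have zc: "z \<in> carrier G1" using z G1.Z_carrier by blast
    have "g = g' \<otimes>\<^bsub>G1\<^esub> (inv\<^bsub>G1\<^esub> g' \<otimes>\<^bsub>G1\<^esub> g)" using g g' by simp
    also have "\<dots> = z \<otimes>\<^bsub>G1\<^esub> g'" using z G1.Z_comm[OF z(1) g'(1)] by simp
    finally have "g \<in> mla_center G1 #>\<^bsub>G1\<^esub> g'" using z(1) unfolding r_coset_def by blast
    hence "mla_center G1 #>\<^bsub>G1\<^esub> g' = mla_center G1 #>\<^bsub>G1\<^esub> g"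
      using G1.repr_independence[OF _ g'(1) G1.Z_subgroup] by blast
    thus "A = B" using g g' by simp
  qed
  have img: "?nu ` carrier ?Q1 = carrier ?Q2"
  proof
    show "?nu ` carrier ?Q1 \<subseteq> carrier ?Q2" using fs by blast
    show "carrier ?Q2 \<subseteq> ?nu ` carrier ?Q1"
    proof
      fix C assume "C \<in> carrier ?Q2"
      then obtain h where h: "h \<in> carrier G2" "C = mla_center G2 #>\<^bsub>G2\<^esub> h"
        using G2.quot_carrier by blast
      obtain g w where gw: "g \<in> carrier G1" "w \<in> mla_center G2" "h = \<mu> g \<otimes>\<^bsub>G2\<^esub> w"
        using h(1) by (rule decomp)
      have "h = w \<otimes>\<^bsub>G2\<^esub> \<mu> g" using gw G2.Z_comm[OF gw(2), of "\<mu> g"] by simp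
      hence "h \<in> mla_center G2 #>\<^bsub>G2\<^esub> \<mu> g" using gw(2) unfolding r_coset_def by blast
      hence "mla_center G2 #>\<^bsub>G2\<^esub> \<mu> g = C"
        using G2.repr_independence[OF _ _ G2.Z_subgroup] gw(1) h(2) by simp
      moreover have "mla_center G1 #>\<^bsub>G1\<^esub> g \<in> carrier ?Q1" using gw(1) G1.quot_carrier by blast
      ultimately show "C \<in> ?nu ` carrier ?Q1" using nc[OF gw(1)] by (metis image_eqI)
    qed
  qed
  show ?thesis unfolding mla_iso_def mla_hom_def bij_betw_def
    using hom st inj img by blast
qed

lemma mu_iso: "restrict \<mu> (Mcomm G1) \<in> mla_iso (sub_mla G1 (Mcomm G1)) (sub_mla G2 (Mcomm G2))"
proof -
  let ?m = "restrict \<mu> (Mcomm G1)"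
  have M1c: "Mcomm G1 \<subseteq> carrier G1" by (rule G1.Mcomm_carrier)
  have fs: "?m \<in> carrier (sub_mla G1 (Mcomm G1)) \<rightarrow> carrier (sub_mla G2 (Mcomm G2))"
    using img_Mcomm by (auto simp: sub_mla_def)
  have mult: "?m (x \<otimes>\<^bsub>G1\<^esub> y) = ?m x \<otimes>\<^bsub>G2\<^esub> ?m y" if "x \<in> Mcomm G1" "y \<in> Mcomm G1" for x y
  proof -
    have "x \<otimes>\<^bsub>G1\<^esub> y \<in> Mcomm G1" using subgroup.m_closed[OF G1.Mcomm_subgroup that] .
    moreover have "x \<in> carrier G1" "y \<in> carrier G1" using that M1c by auto
    ultimately show ?thesis using that by simp
  qed
  have st: "?m (star G1 x y) = star G2 (?m x) (?m y)" if "x \<in> Mcomm G1" "y \<in> Mcomm G1" for x y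
  proof -
    have "star G1 x y \<in> Mcomm G1" using that M1c G1.star_in_Mcomm by blast
    moreover have "x \<in> carrier G1" "y \<in> carrier G1" using that M1c by auto
    ultimately show ?thesis using that by (simp add: mu_star)
  qed
  have "?m \<in> hom (sub_mla G1 (Mcomm G1)) (sub_mla G2 (Mcomm G2))"
    unfolding hom_def using fs mult by (simp add: sub_mla_def)
  moreover have "\<forall>x\<in>carrier (sub_mla G1 (Mcomm G1)). \<forall>y\<in>carrier (sub_mla G1 (Mcomm G1)).
     ?m (star (sub_mla G1 (Mcomm G1)) x y) = star (sub_mla G2 (Mcomm G2)) (?m x) (?m y)"
    using st by (simp add: sub_mla_def)
  moreover have "bij_betw ?m (Mcomm G1) (Mcomm G2)"
  proof -
    have "bij_betw \<mu> (Mcomm G1) (Mcomm G2)" unfolding bij_betw_def using inj_Mcomm img_Mcomm by blast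
    thus ?thesis by (rule bij_betw_cong[THEN iffD1, rotated]) simp
  qed
  ultimately show ?thesis unfolding mla_iso_def mla_hom_def by (simp add: sub_mla_def)
qed

lemma compat: assumes g: "g \<in> carrier G1" and g': "g' \<in> carrier G1"
  and h: "h \<in> carrier G2" and h': "h' \<in> carrier G2"
  and e: "(\<mu> ` (mla_center G1 #>\<^bsub>G1\<^esub> g)) <#>\<^bsub>G2\<^esub> mla_center G2 = mla_center G2 #>\<^bsub>G2\<^esub> h"
  and e': "(\<mu> ` (mla_center G1 #>\<^bsub>G1\<^esub> g')) <#>\<^bsub>G2\<^esub> mla_center G2 = mla_center G2 #>\<^bsub>G2\<^esub> h'"
  shows "restrict \<mu> (Mcomm G1) (gcomm G1 g g') = gcomm G2 h h' \<and>
         restrict \<mu> (Mcomm G1) (star G1 g g') = star G2 h h'"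
proof -
  obtain w where w: "w \<in> mla_center G2" "h = \<mu> g \<otimes>\<^bsub>G2\<^esub> w"
    using coset_rep[OF h g] e nu_coset[OF g] by metis
  obtain w' where w': "w' \<in> mla_center G2" "h' = \<mu> g' \<otimes>\<^bsub>G2\<^esub> w'"
    using coset_rep[OF h' g'] e' nu_coset[OF g'] by metis
  have "restrict \<mu> (Mcomm G1) (gcomm G1 g g') = \<mu> (gcomm G1 g g')"
    using G1.gcomm_in_Mcomm[OF g g'] by simp
  also have "\<dots> = gcomm G2 (\<mu> g) (\<mu> g')" using g g' by (rule mu_gcomm)
  also have "\<dots> = gcomm G2 h h'" using w w' g g' G2.gcomm_Z by simp
  finally have 1: "restrict \<mu> (Mcomm G1) (gcomm G1 g g') = gcomm G2 h h'" .
  have "restrict \<mu> (Mcomm G1) (star G1 g g') = \<mu> (star G1 g g')"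
    using G1.star_in_Mcomm[OF g g'] by simp
  also have "\<dots> = star G2 (\<mu> g) (\<mu> g')" using g g' by (rule mu_star)
  also have "\<dots> = star G2 h h'" using w w' g g' G2.Z_carrier[OF w(1)] G2.Z_carrier[OF w'(1)] by simp
  finally show ?thesis using 1 by simp
qed

end

theorem corollary4p9:
  fixes G1 :: "'a mla" and G2 :: "'b mla" and \<mu> :: "'a \<Rightarrow> 'b"
  assumes "mult_lie_algebra G1" and "mult_lie_algebra G2"
    and "\<mu> \<in> mla_hom G1 G2"
    and "kernel G1 G2 \<mu> \<inter> Mcomm G1 = {\<one>\<^bsub>G1\<^esub>}"
    and "(\<mu> ` carrier G1) <#>\<^bsub>G2\<^esub> mla_center G2 = carrier G2"
  shows "isoclinism G1 G2
           (\<lambda>C. (\<mu> ` C) <#>\<^bsub>G2\<^esub> mla_center G2)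
           (restrict \<mu> (Mcomm G1))"
proof -
  have g1: "group G1" using assms(1) unfolding mult_lie_algebra_def by blast
  have g2: "group G2" using assms(2) unfolding mult_lie_algebra_def by blast
  have "mla_pair G1 G2 \<mu>"
    unfolding mla_pair_def mla_pair_axioms_def mla_def mla_axioms_def
    using g1 g2 assms by blast
  then interpret P: mla_pair G1 G2 \<mu> .
  show ?thesis unfolding isoclinism_def
    using P.nu_iso P.mu_iso P.compat by blast
qed

end
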